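(* The class of subgraphs of the square grid is $(6,1)$-disjointness-expressing.
   Context: The square grid is the infinite graph with vertex set $\mathbb{Z}^2$ in which two points are adjacent iff their Euclidean distance is 1; a subgraph of the square grid means a finite graph isomorphic to a subgraph of it. A class $\mathcal{C}$ of graphs is $(s,\kappa)$-disjointness-expressing if for some constant $\alpha>0$, for every positive integer $N$ and every $X\subseteq\{1,\dots,N\}$ one can define graphs $L(X)$ and $R(X)$, each containing a labelled set $S$ of special vertices, such that for all $A,B\subseteq\{1,\dots,N\}$: (i) the graph $g(L(A),R(B))$ obtained by identifying each vertex of $S$ in $L(A)$ with the corresponding vertex of $S$ in $R(B)$ is connected and has at most $\alpha N^{1/\kappa}$ vertices; (ii) the subgraph of $g(L(A),R(B))$ induced by the closed neighborhood $N[S]$ is independent of $A,B$ (for all $A,A',B,B'$ there is an isomorphism between these induced subgraphs that is the identity on $S$) and has at most $s$ vertices; (iii) $g(L(A),R(B))\in\mathcal{C}$ if and only if $A\cap B=\emptyset$. *)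

theory Defs
  imports Complex_Main
begin

record 'a graph =
  verts :: "'a set"
  edges :: "'a set set"

definition wf_graph :: "'a graph \<Rightarrow> bool" where
  "wf_graph G \<longleftrightarrow> finite (verts G) \<and>
     (\<forall>e\<in>edges G. \<exists>u v. u \<noteq> v \<and> e = {u, v} \<and> u \<in> verts G \<and> v \<in> verts G)"

definition connected_graph :: "'a graph \<Rightarrow> bool" where
  "connected_graph G \<longleftrightarrow> verts G \<noteq> {} \<and>
     (\<forall>u\<in>verts G. \<forall>v\<in>verts G.
        (\<lambda>x y. x \<in> verts G \<and> y \<in> verts G \<and> {x, y} \<in> edges G)\<^sup>*\<^sup>* u v)"

definition grid_adj :: "int \<times> int \<Rightarrow> int \<times> int \<Rightarrow> bool" where
  "grid_adj p q \<longleftrightarrow> (fst p - fst q)^2 + (snd p - snd q)^2 = 1"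

definition grid_subgraph :: "'a graph \<Rightarrow> bool" where
  "grid_subgraph G \<longleftrightarrow> wf_graph G \<and>
     (\<exists>f :: 'a \<Rightarrow> int \<times> int. inj_on f (verts G) \<and>
        (\<forall>u\<in>verts G. \<forall>v\<in>verts G. {u, v} \<in> edges G \<longrightarrow> grid_adj (f u) (f v)))"

definition induced :: "'a graph \<Rightarrow> 'a set \<Rightarrow> 'a graph" where
  "induced G W = \<lparr>verts = W \<inter> verts G, edges = {e \<in> edges G. e \<subseteq> W}\<rparr>"

definition closed_nbhd :: "'a graph \<Rightarrow> 'a set \<Rightarrow> 'a set" where
  "closed_nbhd G S = (S \<inter> verts G) \<union> {v \<in> verts G. \<exists>u\<in>S. {u, v} \<in> edges G}"

definition iso_fixing :: "'a set \<Rightarrow> 'a graph \<Rightarrow> 'a graph \<Rightarrow> bool" where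
  "iso_fixing S G H \<longleftrightarrow> (\<exists>f. bij_betw f (verts G) (verts H) \<and>
     (\<forall>u\<in>verts G. \<forall>v\<in>verts G. {u, v} \<in> edges G \<longleftrightarrow> {f u, f v} \<in> edges H) \<and>
     (\<forall>x\<in>S. f x = x))"

text \<open>Gluing g(L,R): disjoint union of L and R in which each special vertex
  x \<in> S of R is identified with the special vertex x of L.\<close>
definition glue_map :: "'a set \<Rightarrow> 'a \<Rightarrow> 'a + 'a" where
  "glue_map S v = (if v \<in> S then Inl v else Inr v)"

definition glue :: "'a set \<Rightarrow> 'a graph \<Rightarrow> 'a graph \<Rightarrow> ('a + 'a) graph" where
  "glue S L R =
     \<lparr>verts = Inl ` verts L \<union> glue_map S ` verts R,
      edges = (image Inl) ` edges L \<union> (image (glue_map S)) ` edges R\<rparr>"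

text \<open>(s,\<kappa>)-disjointness-expressing classes.  Special vertices are given by a
  finite set S of (nat) vertex names present in every L(X) and R(X).\<close>
definition disjointness_expressing ::
  "((nat + nat) graph \<Rightarrow> bool) \<Rightarrow> nat \<Rightarrow> nat \<Rightarrow> bool" where
  "disjointness_expressing C s \<kappa> \<longleftrightarrow>
     (\<exists>\<alpha>::real. \<alpha> > 0 \<and>
       (\<forall>N::nat. N \<ge> 1 \<longrightarrow>
         (\<exists>(S :: nat set) (L :: nat set \<Rightarrow> nat graph) (R :: nat set \<Rightarrow> nat graph).
            finite S \<and>
            (\<forall>X. X \<subseteq> {1..N} \<longrightarrow> wf_graph (L X) \<and> wf_graph (R X) \<and>
                   S \<subseteq> verts (L X) \<and> S \<subseteq> verts (R X)) \<and>
            (\<forall>A B. A \<subseteq> {1..N} \<longrightarrow> B \<subseteq> {1..N} \<longrightarrow>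
               connected_graph (glue S (L A) (R B)) \<and>
               real (card (verts (glue S (L A) (R B)))) \<le> \<alpha> * real N powr (1 / real \<kappa>) \<and>
               card (closed_nbhd (glue S (L A) (R B)) (Inl ` S)) \<le> s \<and>
               (C (glue S (L A) (R B)) \<longleftrightarrow> A \<inter> B = {})) \<and>
            (\<forall>A B A' B'. A \<subseteq> {1..N} \<longrightarrow> B \<subseteq> {1..N} \<longrightarrow>
                         A' \<subseteq> {1..N} \<longrightarrow> B' \<subseteq> {1..N} \<longrightarrow>
               iso_fixing (Inl ` S)
                 (induced (glue S (L A) (R B)) (closed_nbhd (glue S (L A) (R B)) (Inl ` S)))
                 (induced (glue S (L A') (R B')) (closed_nbhd (glue S (L A') (R B')) (Inl ` S)))))))"

end

theory Submission imports Defs "HOL-Library.Product_Plus" "HOL-Library.Nat_Bijection" begin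

definition U :: "(int \<times> int) set" where "U = {(1,0),(-1,0),(0,1),(0,-1)}"

lemma adj_iff: "grid_adj p q \<longleftrightarrow> q - p \<in> U"
proof -
  obtain a b c d where pq: "p = (a,b)" "q = (c,d)" by (cases p, cases q) auto
  have "(a - c)^2 + (b - d)^2 = 1 \<longleftrightarrow> (c - a, d - b) \<in> U"
  proof
    assume h: "(a - c)^2 + (b - d)^2 = 1"
    have "(a-c)^2 \<ge> 0" "(b-d)^2 \<ge> 0" by auto
    then have "(a-c)^2 \<le> 1" "(b-d)^2 \<le> 1" using h by linarith+
    then have "\<bar>a-c\<bar> \<le> 1" "\<bar>b-d\<bar> \<le> 1"
      by (metis abs_le_square_iff abs_one one_power2)+
    then have "a - c \<in> {-1,0,1}" "b - d \<in> {-1,0,1}" by auto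
    then show "(c - a, d - b) \<in> U" using h unfolding U_def by (auto simp: power2_eq_square)
  next
    assume "(c - a, d - b) \<in> U"
    then show "(a - c)^2 + (b - d)^2 = 1" unfolding U_def by (auto simp: power2_eq_square algebra_simps)
  qed
  then show ?thesis using pq by (simp add: grid_adj_def)
qed

lemma adj_sym: "grid_adj p q \<Longrightarrow> grid_adj q p"
  by (simp add: grid_adj_def power2_commute)

lemma U_neg: "u \<in> U \<Longrightarrow> - u \<in> U" by (auto simp: U_def)

lemma vec4:
  fixes u w v d b :: "int \<times> int"
  assumes "u \<in> U" "w \<in> U" "v \<in> U" "b \<in> U" "u + w + v = d" "d \<in> U"
    "u + w \<noteq> 0" "u \<noteq> d" "d \<noteq> - b" "b \<noteq> u" "b \<noteq> - u"
  shows "d = b \<and> w = b"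
  using assms unfolding U_def
  apply (simp only: insert_iff empty_iff simp_thms)
  apply (elim disjE)
  apply (simp_all add: zero_prod_def)
  done

lemma vec_sq:
  fixes u w v d :: "int \<times> int"
  assumes "u \<in> U" "w \<in> U" "v \<in> U" "d \<in> U" "u + w + v = d" "u + w \<noteq> 0" "u \<noteq> d"
  shows "w = d \<and> d \<noteq> - u"
  using assms unfolding U_def
  apply (simp only: insert_iff empty_iff simp_thms)
  apply (elim disjE)
  apply (simp_all add: zero_prod_def)
  done

lemma unit3:
  fixes x y z :: "int \<times> int"
  assumes "x \<in> U" "y \<in> U" "z \<in> U" "y \<noteq> x" "y \<noteq> - x" "z \<noteq> x" "z \<noteq> - x" "z \<noteq> - y"
  shows "z = y"
  using assms unfolding U_def
  apply (simp only: insert_iff empty_iff simp_thms)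
  apply (elim disjE)
  apply (simp_all add: zero_prod_def)
  done

lemma sq:
  fixes p q r s :: "int \<times> int"
  assumes "grid_adj p q" "grid_adj q s" "grid_adj s r" "grid_adj r p" "p \<noteq> s" "q \<noteq> r"
  shows "s = q + (r - p) \<and> r - p \<noteq> q - p \<and> r - p \<noteq> p - q"
proof -
  have "q - p \<in> U" "s - q \<in> U" "r - s \<in> U" "p - r \<in> U" using assms(1-4) by (simp_all add: adj_iff)
  then have d: "r - p \<in> U" using U_neg[of "p - r"] by simp
  have "(q - p) + (s - q) + (r - s) = r - p" by simp
  moreover have "(q - p) + (s - q) \<noteq> 0" using assms(5) by simp
  moreover have "q - p \<noteq> r - p" using assms(6) by simp
  ultimately have "s - q = r - p \<and> r - p \<noteq> - (q - p)"
    using vec_sq[of "q - p" "s - q" "r - s" "r - p"] \<open>q - p \<in> U\<close> \<open>s - q \<in> U\<close> \<open>r - s \<in> U\<close> d by blast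
  then show ?thesis using assms(6) by (auto simp: algebra_simps)
qed

lemma sqstep:
  fixes p q r s b :: "int \<times> int"
  assumes "grid_adj p q" "grid_adj q s" "grid_adj s r" "grid_adj r p" "p \<noteq> s" "q \<noteq> r"
    "b \<in> U" "b \<noteq> q - p" "b \<noteq> p - q" "r \<noteq> p - b"
  shows "r = p + b \<and> s = q + b"
proof -
  from sq[OF assms(1-6)] have h: "s = q + (r - p)" "r - p \<noteq> q - p" "r - p \<noteq> - (q - p)" by auto
  have "q - p \<in> U" using assms(1) by (simp add: adj_iff)
  have "r - p \<in> U" using assms(4) adj_sym adj_iff by blast
  have "r - p \<noteq> - b" using assms(10) by (auto simp: algebra_simps)
  have "b \<noteq> - (q - p)" using assms(9) by simp
  have "r - p = b" using unit3[of "q - p" b "r - p"] h \<open>q - p \<in> U\<close> \<open>r - p \<in> U\<close> assms(7,8)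
      \<open>r - p \<noteq> - b\<close> \<open>b \<noteq> - (q - p)\<close> by blast
  then show ?thesis using h by (auto simp: algebra_simps)
qed

definition S0 :: "(int \<times> int) set" where "S0 = {(0,0),(0,1)}"

definition PLs :: "nat \<Rightarrow> nat set \<Rightarrow> (int \<times> int) set" where
  "PLs M X = {(x, int j) | x j. (x = -2 \<or> x = -1) \<and> j \<le> M} \<union> {(0,0),(0,1)} \<union> {(0, int i + 2) | i. i \<in> X}"

definition PRs :: "nat \<Rightarrow> nat set \<Rightarrow> (int \<times> int) set" where
  "PRs M X = {(x, int j) | x j. (x = 1 \<or> x = 2) \<and> j \<le> M} \<union> {(0,0),(0,1)} \<union> {(0, int i + 2) | i. i \<in> X}"

lemma memL: "0 \<le> y \<Longrightarrow> y \<le> int M \<Longrightarrow> x = -2 \<or> x = -1 \<Longrightarrow> (x, y) \<in> PLs M X"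
  unfolding PLs_def by (rule UnI1, rule UnI1, rule CollectI, rule exI[of _ x], rule exI[of _ "nat y"]) auto

lemma memR: "0 \<le> y \<Longrightarrow> y \<le> int M \<Longrightarrow> x = 1 \<or> x = 2 \<Longrightarrow> (x, y) \<in> PRs M X"
  unfolding PRs_def by (rule UnI1, rule UnI1, rule CollectI, rule exI[of _ x], rule exI[of _ "nat y"]) auto

lemma memL0: "(0,0) \<in> PLs M X" "(0,1) \<in> PLs M X" unfolding PLs_def by auto
lemma memR0: "(0,0) \<in> PRs M X" "(0,1) \<in> PRs M X" unfolding PRs_def by auto
lemma memLt: "i \<in> X \<Longrightarrow> (0, int i + 2) \<in> PLs M X" unfolding PLs_def by auto
lemma memRt: "i \<in> X \<Longrightarrow> (0, int i + 2) \<in> PRs M X" unfolding PRs_def by auto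

lemma adjc: "grid_adj (x,y) (x',y') \<longleftrightarrow> (x-x')^2+(y-y')^2 = 1" by (simp add: grid_adj_def)

lemma rigid:
  fixes F G :: "int \<times> int \<Rightarrow> int \<times> int" and M i :: nat and A B :: "nat set"
  assumes adjL: "\<And>p q. p \<in> PLs M A \<Longrightarrow> q \<in> PLs M A \<Longrightarrow> grid_adj p q \<Longrightarrow> grid_adj (F p) (F q)"
  and adjR: "\<And>p q. p \<in> PRs M B \<Longrightarrow> q \<in> PRs M B \<Longrightarrow> grid_adj p q \<Longrightarrow> grid_adj (G p) (G q)"
  and injL: "\<And>p q. p \<in> PLs M A \<Longrightarrow> q \<in> PLs M A \<Longrightarrow> p \<noteq> q \<Longrightarrow> F p \<noteq> F q"
  and injR: "\<And>p q. p \<in> PRs M B \<Longrightarrow> q \<in> PRs M B \<Longrightarrow> p \<noteq> q \<Longrightarrow> G p \<noteq> G q"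
  and cross: "\<And>p q. p \<in> PLs M A \<Longrightarrow> q \<in> PRs M B \<Longrightarrow> F p = G q \<Longrightarrow> p \<in> S0"
  and sh: "G (0,0) = F (0,0)" "G (0,1) = F (0,1)"
  and i: "i \<in> A" "i \<in> B" "i + 3 \<le> M"
  shows False
proof -
  note mL = memL[of _ M _ A] and mR = memR[of _ M _ B]
  have M1: "int M \<ge> 3" using i by linarith
  define z0 where "z0 = F (0,0)"
  define b where "b = F (0,1) - z0"
  define a where "a = z0 - F (-1,0)"
  have c0: "F (-1,1) = F (-1,0) + b \<and> b \<noteq> - a \<and> b \<noteq> a"
  proof -
    have h: "grid_adj (F (0,0)) (F (-1,0))" "grid_adj (F (-1,0)) (F (-1,1))"
      "grid_adj (F (-1,1)) (F (0,1))" "grid_adj (F (0,1)) (F (0,0))"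
      using M1 by (intro adjL mL memL0; simp add: adjc)+
    have n: "F (0,0) \<noteq> F (-1,1)" "F (-1,0) \<noteq> F (0,1)"
      using M1 by (intro injL mL memL0; simp)+
    show ?thesis using sq[OF h n] unfolding a_def b_def z0_def by (auto simp: algebra_simps)
  qed
  have "grid_adj (F (-1,0)) (F (0,0))" using M1 by (intro adjL mL memL0; simp add: adjc)
  then have aU: "a \<in> U" unfolding a_def z0_def by (simp add: adj_iff)
  have "grid_adj (F (0,0)) (F (0,1))" using M1 by (intro adjL memL0; simp add: adjc)
  then have bU: "b \<in> U" unfolding b_def z0_def by (simp add: adj_iff)
  have ab: "a \<noteq> - b" "- a \<noteq> - b" "- a \<noteq> b" "a \<noteq> b" using c0 by (metis minus_minus)+
  have U2: "- a \<in> U" using aU U_neg by blast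
  have cl0: "F (-2,0) = F (-1,0) + - a \<and> F (-2,1) = F (-1,1) + - a"
  proof (rule sqstep)
    show "grid_adj (F (-1,0)) (F (-1,1))" "grid_adj (F (-1,1)) (F (-2,1))"
      "grid_adj (F (-2,1)) (F (-2,0))" "grid_adj (F (-2,0)) (F (-1,0))"
      using M1 by (intro adjL mL; simp add: adjc)+
    show "F (-1,0) \<noteq> F (-2,1)" "F (-1,1) \<noteq> F (-2,0)" using M1 by (intro injL mL; simp)+
    show "- a \<in> U" by (rule U2)
    show "- a \<noteq> F (-1, 1) - F (-1, 0)" "- a \<noteq> F (-1, 0) - F (-1, 1)" using c0 by (auto simp: algebra_simps)
    have "F (-2,0) \<noteq> F (0,0)" using M1 by (intro injL mL memL0; simp)
    then show "F (-2, 0) \<noteq> F (-1, 0) - - a" unfolding a_def z0_def by simp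
  qed
  have cr0: "G (1,0) = F (0,0) + a \<and> G (1,1) = F (0,1) + a"
  proof (rule sqstep)
    show "grid_adj (F (0,0)) (F (0,1))" by (intro adjL memL0; simp add: adjc)
    show "grid_adj (F (0,1)) (G (1,1))" "grid_adj (G (1,1)) (G (1,0))" "grid_adj (G (1,0)) (F (0,0))"
      unfolding sh[symmetric] using M1 by (intro adjR mR memR0; simp add: adjc)+
    show "F (0,0) \<noteq> G (1,1)" "F (0,1) \<noteq> G (1,0)"
      unfolding sh[symmetric] using M1 by (intro injR mR memR0; simp)+
    show "a \<in> U" by (rule aU)
    show "a \<noteq> F (0,1) - F (0,0)" "a \<noteq> F (0,0) - F (0,1)"
      using c0 unfolding b_def z0_def by (auto simp: algebra_simps)
    have "G (1,0) \<noteq> F (-1,0)"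
    proof
      assume "G (1,0) = F (-1,0)"
      moreover have "(-1,0) \<in> PLs M A" "(1,0) \<in> PRs M B" using M1 by (intro mL mR; simp)+
      ultimately have "(-1,0) \<in> S0" using cross by metis
      then show False by (simp add: S0_def)
    qed
    then show "G (1,0) \<noteq> F (0,0) - a" unfolding a_def z0_def by simp
  qed
  have cr1: "G (2,0) = G (1,0) + a \<and> G (2,1) = G (1,1) + a"
  proof (rule sqstep)
    show "grid_adj (G (1,0)) (G (1,1))" "grid_adj (G (1,1)) (G (2,1))"
      "grid_adj (G (2,1)) (G (2,0))" "grid_adj (G (2,0)) (G (1,0))"
      using M1 by (intro adjR mR; simp add: adjc)+
    show "G (1,0) \<noteq> G (2,1)" "G (1,1) \<noteq> G (2,0)" using M1 by (intro injR mR; simp)+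
    show "a \<in> U" by (rule aU)
    show "a \<noteq> G (1,1) - G (1,0)" "a \<noteq> G (1,0) - G (1,1)" using c0 cr0 unfolding b_def z0_def
      by (auto simp: algebra_simps)
    have "G (2,0) \<noteq> G (0,0)" using M1 by (intro injR mR memR0; simp)
    then show "G (2,0) \<noteq> G (1,0) - a" using cr0 unfolding sh a_def z0_def by (auto simp: algebra_simps)
  qed
  define Inv where "Inv y \<longleftrightarrow> F (-2,y) = F (-1,y) - a \<and> G (1,y) = F (-1,y) + a + a \<and> G (2,y) = F (-1,y) + a + a + a" for y
  define St where "St y \<longleftrightarrow> F (-1,y+1) = F (-1,y) + b" for y
  have base0: "Inv 1 \<and> Inv 0 \<and> St 0"
    using c0 cl0 cr0 cr1 unfolding Inv_def St_def a_def b_def z0_def by (auto simp: algebra_simps)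
  have main: "Inv y \<and> Inv (y - 1) \<and> St (y - 1)" if "1 \<le> y" "y \<le> int M" for y
    using that
  proof (induction y rule: int_ge_induct)
    case base
    then show ?case using base0 by simp
  next
    case (step y)
    then have IH: "Inv y" "Inv (y - 1)" "St (y - 1)" and y: "1 \<le> y" "y + 1 \<le> int M" by auto
    have sL: "F (-1, y+1) = F (-1,y) + b \<and> F (-2, y+1) = F (-2, y) + b"
    proof (rule sqstep)
      show "grid_adj (F (-1,y)) (F (-2,y))" "grid_adj (F (-2,y)) (F (-2,y+1))"
        "grid_adj (F (-2,y+1)) (F (-1,y+1))" "grid_adj (F (-1,y+1)) (F (-1,y))"
        using y by (intro adjL mL; simp add: adjc)+
      show "F (-1,y) \<noteq> F (-2,y+1)" "F (-2,y) \<noteq> F (-1,y+1)" using y by (intro injL mL; simp)+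
      show "b \<in> U" by (rule bU)
      have d: "F (-2,y) = F (-1,y) - a" using IH unfolding Inv_def by simp
      show "b \<noteq> F (-2,y) - F (-1,y)" "b \<noteq> F (-1,y) - F (-2,y)" using c0 by (simp_all add: d)
      have "F (-1,y+1) \<noteq> F (-1,y-1)" using y by (intro injL mL; simp)
      then show "F (-1,y+1) \<noteq> F (-1,y) - b" using IH unfolding St_def by (auto simp: algebra_simps)
    qed
    have sR: "G (1, y+1) = G (1,y) + b \<and> G (2, y+1) = G (2, y) + b"
    proof (rule sqstep)
      show "grid_adj (G (1,y)) (G (2,y))" "grid_adj (G (2,y)) (G (2,y+1))"
        "grid_adj (G (2,y+1)) (G (1,y+1))" "grid_adj (G (1,y+1)) (G (1,y))"
        using y by (intro adjR mR; simp add: adjc)+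
      show "G (1,y) \<noteq> G (2,y+1)" "G (2,y) \<noteq> G (1,y+1)" using y by (intro injR mR; simp)+
      show "b \<in> U" by (rule bU)
      have d: "G (2,y) = G (1,y) + a" using IH unfolding Inv_def by simp
      show "b \<noteq> G (2,y) - G (1,y)" "b \<noteq> G (1,y) - G (2,y)" using c0 by (simp_all add: d)
      have "G (1,y+1) \<noteq> G (1,y-1)" using y by (intro injR mR; simp)
      then show "G (1,y+1) \<noteq> G (1,y) - b" using IH unfolding St_def Inv_def
        by (auto simp: algebra_simps)
    qed
    show ?case using IH sL sR unfolding Inv_def St_def by (auto simp: algebra_simps)
  qed
  define y0 where "y0 = int i + 2"
  have y0: "2 \<le> y0" "y0 + 1 \<le> int M" using i unfolding y0_def by auto
  have m1: "Inv y0" "St (y0 - 1)" using main[of y0] y0 by auto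
  have m2: "Inv (y0 + 1)" "St y0" using main[of "y0 + 1"] y0 by auto
  have m3: "Inv (y0 - 1)" using main[of y0] y0 by auto
  define q where "q = F (-1, y0)"
  have tL: "F (0, y0) = q + a"
  proof -
    have ad: "grid_adj q (F (0,y0))" unfolding q_def
      using y0 by (intro adjL mL memLt[OF i(1), folded y0_def]; simp add: adjc)
    have n1: "F (0,y0) \<noteq> F (-2,y0)" "F (0,y0) \<noteq> F (-1,y0+1)" "F (0,y0) \<noteq> F (-1,y0-1)"
      using y0 by (intro injL mL memLt[OF i(1), folded y0_def]; simp)+
    have "F (0,y0) - q \<in> U" using ad by (simp add: adj_iff)
    moreover have "F (0,y0) - q \<noteq> b" "F (0,y0) - q \<noteq> - b" "F (0,y0) - q \<noteq> - a"
      using n1 m1 m2 unfolding q_def Inv_def St_def by (auto simp: algebra_simps)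
    ultimately have "F (0,y0) - q = a" using unit3[of b a "F (0,y0) - q"] aU bU ab by auto
    then show ?thesis by (auto simp: algebra_simps)
  qed
  have tR: "G (0, y0) = q + a"
  proof -
    have ad: "grid_adj (G (1,y0)) (G (0,y0))"
      using y0 by (intro adjR mR memRt[OF i(2), folded y0_def]; simp add: adjc)
    have n1: "G (0,y0) \<noteq> G (2,y0)" "G (0,y0) \<noteq> G (1,y0+1)" "G (0,y0) \<noteq> G (1,y0-1)"
      using y0 by (intro injR mR memRt[OF i(2), folded y0_def]; simp)+
    have "G (0,y0) - G (1,y0) \<in> U" using ad by (simp add: adj_iff)
    moreover have "G (0,y0) - G (1,y0) \<noteq> b" "G (0,y0) - G (1,y0) \<noteq> - b" "G (0,y0) - G (1,y0) \<noteq> a"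
      using n1 m1 m2 m3 unfolding Inv_def St_def by (auto simp: algebra_simps)
    ultimately have "G (0,y0) - G (1,y0) = - a" using unit3[of b "- a" "G (0,y0) - G (1,y0)"] U2 bU ab by auto
    then show ?thesis using m1 unfolding q_def Inv_def by (auto simp: algebra_simps)
  qed
  have "(0, y0) \<in> S0"
    using cross[OF memLt[OF i(1), folded y0_def] memRt[OF i(2), folded y0_def]] tL tR by simp
  then show False using y0 by (simp add: S0_def)
qed

definition enc :: "int \<times> int \<Rightarrow> nat" where
  "enc p = prod_encode (int_encode (fst p), int_encode (snd p))"
definition dec :: "nat \<Rightarrow> int \<times> int" where
  "dec n = (int_decode (fst (prod_decode n)), int_decode (snd (prod_decode n)))"

lemma dec_enc[simp]: "dec (enc p) = p" by (simp add: enc_def dec_def)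
lemma enc_inj[simp]: "enc p = enc q \<longleftrightarrow> p = q" by (metis dec_enc)

definition gg :: "(int \<times> int) set \<Rightarrow> nat graph" where
  "gg P = \<lparr>verts = enc ` P, edges = {{enc p, enc q} | p q. p \<in> P \<and> q \<in> P \<and> grid_adj p q}\<rparr>"

definition SS :: "nat set" where "SS = enc ` S0"
definition gl :: "int \<times> int \<Rightarrow> nat + nat" where "gl p = Inl (enc p)"
definition gr :: "int \<times> int \<Rightarrow> nat + nat" where "gr p = glue_map SS (enc p)"

lemma gr_alt: "gr p = (if p \<in> S0 then Inl (enc p) else Inr (enc p))"
  by (auto simp: gr_def glue_map_def SS_def)

lemma gl_inj[simp]: "gl p = gl q \<longleftrightarrow> p = q" by (simp add: gl_def)
lemma gr_inj[simp]: "gr p = gr q \<longleftrightarrow> p = q" by (auto simp: gr_alt)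
lemma gl_gr[simp]: "gl p = gr q \<longleftrightarrow> p = q \<and> p \<in> S0" by (auto simp: gr_alt gl_def)
lemma gr_gl[simp]: "gr q = gl p \<longleftrightarrow> p = q \<and> p \<in> S0" by (auto simp: gr_alt gl_def)

definition EL :: "(int \<times> int) set \<Rightarrow> (nat + nat) set set" where
  "EL P = {{gl p, gl q} | p q. p \<in> P \<and> q \<in> P \<and> grid_adj p q}"
definition ER :: "(int \<times> int) set \<Rightarrow> (nat + nat) set set" where
  "ER P = {{gr p, gr q} | p q. p \<in> P \<and> q \<in> P \<and> grid_adj p q}"

lemma img_pairs: "image h ` {{g p, g q} | p q. C p q} = {{h (g p), h (g q)} | p q. C p q}"
  (is "?A = ?B")
proof
  show "?A \<subseteq> ?B" by auto
  show "?B \<subseteq> ?A"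
  proof
    fix x assume "x \<in> ?B"
    then obtain p q where "x = {h (g p), h (g q)}" "C p q" by blast
    then show "x \<in> ?A" by (intro image_eqI[of _ _ "{g p, g q}"]) auto
  qed
qed

lemma glue_gg: "glue SS (gg P) (gg Q) = \<lparr>verts = gl ` P \<union> gr ` Q, edges = EL P \<union> ER Q\<rparr>"
proof -
  have 1: "Inl ` enc ` P = gl ` P" by (auto simp: gl_def)
  have 2: "glue_map SS ` enc ` Q = gr ` Q" by (auto simp: gr_def)
  have 3: "image Inl ` edges (gg P) = EL P" unfolding gg_def EL_def gl_def
    using img_pairs[of Inl enc "\<lambda>p q. p \<in> P \<and> q \<in> P \<and> grid_adj p q"] by simp
  have 4: "image (glue_map SS) ` edges (gg Q) = ER Q" unfolding gg_def ER_def gr_def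
    using img_pairs[of "glue_map SS" enc "\<lambda>p q. p \<in> Q \<and> q \<in> Q \<and> grid_adj p q"] by simp
  show ?thesis unfolding glue_def using 1 2 3 4 by (simp add: gg_def)
qed

lemma adj_neq: "grid_adj p q \<Longrightarrow> p \<noteq> q" by (auto simp: grid_adj_def)

lemma wf_gg: assumes "finite P" shows "wf_graph (gg P)"
  unfolding wf_graph_def
proof (intro conjI ballI)
  show "finite (verts (gg P))" using assms by (simp add: gg_def)
  fix e assume "e \<in> edges (gg P)"
  then obtain p q where "e = {enc p, enc q}" "p \<in> P" "q \<in> P" "grid_adj p q" unfolding gg_def by auto
  then show "\<exists>u v. u \<noteq> v \<and> e = {u, v} \<and> u \<in> verts (gg P) \<and> v \<in> verts (gg P)"
    by (intro exI[of _ "enc p"] exI[of _ "enc q"]) (auto dest: adj_neq simp: gg_def)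
qed

lemma wf_glue: assumes "finite P" "finite Q" shows "wf_graph (glue SS (gg P) (gg Q))"
  unfolding glue_gg wf_graph_def
proof (intro conjI ballI; simp add: assms)
  fix e assume "e \<in> EL P \<or> e \<in> ER Q"
  then show "\<exists>u v. u \<noteq> v \<and> e = {u, v} \<and> (u \<in> gl ` P \<or> u \<in> gr ` Q) \<and> (v \<in> gl ` P \<or> v \<in> gr ` Q)"
  proof
    assume "e \<in> EL P"
    then obtain p q where "e = {gl p, gl q}" "p \<in> P" "q \<in> P" "grid_adj p q" unfolding EL_def by blast
    then show ?thesis by (intro exI[of _ "gl p"] exI[of _ "gl q"]) (auto dest: adj_neq)
  next
    assume "e \<in> ER Q"
    then obtain p q where "e = {gr p, gr q}" "p \<in> Q" "q \<in> Q" "grid_adj p q" unfolding ER_def by blast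
    then show ?thesis by (intro exI[of _ "gr p"] exI[of _ "gr q"]) (auto dest: adj_neq)
  qed
qed

lemma fin_PLs: "finite X \<Longrightarrow> finite (PLs M X)"
proof -
  assume X: "finite X"
  have "PLs M X \<subseteq> (\<lambda>(x,j). (x, int j)) ` ({-2::int,-1} \<times> {..M}) \<union> {(0,0),(0,1)} \<union> (\<lambda>i. (0, int i + 2)) ` X"
    unfolding PLs_def by auto
  then show ?thesis by (rule finite_subset) (use X in auto)
qed

lemma fin_PRs: "finite X \<Longrightarrow> finite (PRs M X)"
proof -
  assume X: "finite X"
  have "PRs M X \<subseteq> (\<lambda>(x,j). (x, int j)) ` ({1::int,2} \<times> {..M}) \<union> {(0,0),(0,1)} \<union> (\<lambda>i. (0, int i + 2)) ` X"
    unfolding PRs_def by auto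
  then show ?thesis by (rule finite_subset) (use X in auto)
qed

lemma card_PLs: "finite X \<Longrightarrow> card (PLs M X) \<le> 2 * (M + 1) + 2 + card X"
proof -
  assume X: "finite X"
  have "PLs M X \<subseteq> (\<lambda>(x,j). (x, int j)) ` ({-2::int,-1} \<times> {..M}) \<union> {(0,0),(0,1)} \<union> (\<lambda>i. (0, int i + 2)) ` X"
    unfolding PLs_def by auto
  then have "card (PLs M X) \<le> card ((\<lambda>(x,j). (x, int j)) ` ({-2::int,-1} \<times> {..M}) \<union> {(0,0),(0,1)} \<union> (\<lambda>i. (0, int i + 2)) ` X)"
    by (rule card_mono[rotated]) (use X in auto)
  also have "\<dots> \<le> card ((\<lambda>(x,j). (x, int j)) ` ({-2::int,-1} \<times> {..M})) + card {(0::int,0::int),(0,1)} + card ((\<lambda>i. (0::int, int i + 2)) ` X)"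
    by (meson card_Un_le le_trans add_le_mono order_refl)
  also have "\<dots> \<le> card ({-2::int,-1} \<times> {..M}) + 2 + card X"
    by (intro add_le_mono card_image_le) (auto simp: card_insert_if X)
  also have "card ({-2::int,-1} \<times> {..M}) = 2 * (M + 1)" by (simp add: card_cartesian_product)
  finally show ?thesis .
qed

lemma card_PRs: "finite X \<Longrightarrow> card (PRs M X) \<le> 2 * (M + 1) + 2 + card X"
proof -
  assume X: "finite X"
  have "PRs M X \<subseteq> (\<lambda>(x,j). (x, int j)) ` ({1::int,2} \<times> {..M}) \<union> {(0,0),(0,1)} \<union> (\<lambda>i. (0, int i + 2)) ` X"
    unfolding PRs_def by auto
  then have "card (PRs M X) \<le> card ((\<lambda>(x,j). (x, int j)) ` ({1::int,2} \<times> {..M}) \<union> {(0,0),(0,1)} \<union> (\<lambda>i. (0, int i + 2)) ` X)"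
    by (rule card_mono[rotated]) (use X in auto)
  also have "\<dots> \<le> card ((\<lambda>(x,j). (x, int j)) ` ({1::int,2} \<times> {..M})) + card {(0::int,0::int),(0,1)} + card ((\<lambda>i. (0::int, int i + 2)) ` X)"
    by (meson card_Un_le le_trans add_le_mono order_refl)
  also have "\<dots> \<le> card ({1::int,2} \<times> {..M}) + 2 + card X"
    by (intro add_le_mono card_image_le) (auto simp: card_insert_if X)
  also have "card ({1::int,2} \<times> {..M}) = 2 * (M + 1)" by (simp add: card_cartesian_product)
  finally show ?thesis .
qed

abbreviation Gr :: "nat \<Rightarrow> nat set \<Rightarrow> nat set \<Rightarrow> (nat + nat) graph" where
  "Gr M A B \<equiv> glue SS (gg (PLs M A)) (gg (PRs M B))"

lemma f_gl[simp]: "case_sum dec dec (gl p) = p" by (simp add: gl_def)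
lemma f_gr[simp]: "case_sum dec dec (gr p) = p" by (simp add: gr_alt)

lemma inter_PL_PR: "p \<in> PLs M A \<Longrightarrow> p \<in> PRs M B \<Longrightarrow> p \<in> S0 \<or> (\<exists>i\<in>A \<inter> B. p = (0, int i + 2))"
  unfolding PLs_def PRs_def S0_def by auto

lemma pos:
  assumes "finite A" "finite B" "A \<inter> B = {}"
  shows "grid_subgraph (Gr M A B)"
  unfolding grid_subgraph_def
proof (intro conjI exI[of _ "case_sum dec dec"])
  show "wf_graph (Gr M A B)" using assms by (intro wf_glue fin_PLs fin_PRs)
  show "inj_on (case_sum dec dec) (verts (Gr M A B))"
  proof (rule inj_onI)
    fix x y assume xy: "x \<in> verts (Gr M A B)" "y \<in> verts (Gr M A B)" "case_sum dec dec x = case_sum dec dec y"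
    have cr: "gl p = gr q" if "p \<in> PLs M A" "q \<in> PRs M B" "p = q" for p q
    proof -
      have "p \<in> S0" using inter_PL_PR[of p M A B] that assms(3) by auto
      then show ?thesis using that by simp
    qed
    from xy show "x = y" unfolding glue_gg by (auto dest: cr simp: gr_gl)
  qed
  show "\<forall>u\<in>verts (Gr M A B). \<forall>v\<in>verts (Gr M A B). {u, v} \<in> edges (Gr M A B) \<longrightarrow>
      grid_adj (case_sum dec dec u) (case_sum dec dec v)"
  proof (intro ballI impI)
    fix u v assume "{u, v} \<in> edges (Gr M A B)"
    then have "(\<exists>p q. {u,v} = {gl p, gl q} \<and> grid_adj p q) \<or> (\<exists>p q. {u,v} = {gr p, gr q} \<and> grid_adj p q)"
      unfolding glue_gg EL_def ER_def by auto
    then show "grid_adj (case_sum dec dec u) (case_sum dec dec v)"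
      by (auto simp: doubleton_eq_iff dest: adj_sym)
  qed
qed

lemma neg:
  assumes "grid_subgraph (Gr M A B)" "i \<in> A" "i \<in> B" "i + 3 \<le> M"
  shows False
proof -
  obtain f where f: "inj_on f (verts (Gr M A B))"
    "\<And>u v. u \<in> verts (Gr M A B) \<Longrightarrow> v \<in> verts (Gr M A B) \<Longrightarrow> {u, v} \<in> edges (Gr M A B) \<Longrightarrow> grid_adj (f u) (f v)"
    using assms(1) unfolding grid_subgraph_def by blast
  have vl: "gl p \<in> verts (Gr M A B)" if "p \<in> PLs M A" for p using that unfolding glue_gg by simp
  have vr: "gr p \<in> verts (Gr M A B)" if "p \<in> PRs M B" for p using that unfolding glue_gg by simp
  show False
  proof (rule rigid[of M A "f \<circ> gl" B "f \<circ> gr" i])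
    fix p q assume pq: "p \<in> PLs M A" "q \<in> PLs M A" "grid_adj p q"
    then have "{gl p, gl q} \<in> EL (PLs M A)" unfolding EL_def by blast
    then have "{gl p, gl q} \<in> edges (Gr M A B)" unfolding glue_gg by simp
    then show "grid_adj ((f \<circ> gl) p) ((f \<circ> gl) q)" using f(2) vl pq by simp
  next
    fix p q assume pq: "p \<in> PRs M B" "q \<in> PRs M B" "grid_adj p q"
    then have "{gr p, gr q} \<in> ER (PRs M B)" unfolding ER_def by blast
    then have "{gr p, gr q} \<in> edges (Gr M A B)" unfolding glue_gg by simp
    then show "grid_adj ((f \<circ> gr) p) ((f \<circ> gr) q)" using f(2) vr pq by simp
  next
    fix p q assume pq: "p \<in> PLs M A" "q \<in> PLs M A" "p \<noteq> q"
    then show "(f \<circ> gl) p \<noteq> (f \<circ> gl) q" using inj_onD[OF f(1)] vl by fastforce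
  next
    fix p q assume pq: "p \<in> PRs M B" "q \<in> PRs M B" "p \<noteq> q"
    then show "(f \<circ> gr) p \<noteq> (f \<circ> gr) q" using inj_onD[OF f(1)] vr by fastforce
  next
    fix p q assume pq: "p \<in> PLs M A" "q \<in> PRs M B" "(f \<circ> gl) p = (f \<circ> gr) q"
    then have "gl p = gr q" using inj_onD[OF f(1)] vl vr by fastforce
    then show "p \<in> S0" by auto
  next
    show "(f \<circ> gr) (0,0) = (f \<circ> gl) (0,0)" "(f \<circ> gr) (0,1) = (f \<circ> gl) (0,1)"
      by (simp_all add: S0_def gr_alt gl_def)
  qed (use assms in auto)
qed

lemma rtranclp_sym:
  assumes "\<And>x y. R x y \<Longrightarrow> R y x" "R\<^sup>*\<^sup>* x y" shows "R\<^sup>*\<^sup>* y x"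
  using assms(2)
proof (induction rule: rtranclp_induct)
  case base then show ?case by simp
next
  case (step y z) then show ?case using assms(1) by (meson converse_rtranclp_into_rtranclp)
qed

lemma casesL: "p \<in> PLs M X \<Longrightarrow> (\<exists>x j. p = (x, int j) \<and> x \<in> {-2,-1} \<and> j \<le> M) \<or> p = (0,0) \<or> p = (0,1) \<or> (\<exists>i\<in>X. p = (0, int i + 2))"
  by (auto simp: PLs_def)
lemma casesR: "p \<in> PRs M X \<Longrightarrow> (\<exists>x j. p = (x, int j) \<and> x \<in> {1,2} \<and> j \<le> M) \<or> p = (0,0) \<or> p = (0,1) \<or> (\<exists>i\<in>X. p = (0, int i + 2))"
  by (auto simp: PRs_def)

lemma conn:
  assumes M: "1 \<le> M" and iA: "\<forall>i\<in>A. i + 2 \<le> M" and iB: "\<forall>i\<in>B. i + 2 \<le> M"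
  shows "connected_graph (Gr M A B)"
proof -
  define Rel where "Rel = (\<lambda>x y. x \<in> verts (Gr M A B) \<and> y \<in> verts (Gr M A B) \<and> {x, y} \<in> edges (Gr M A B))"
  have sym: "Rel x y \<Longrightarrow> Rel y x" for x y unfolding Rel_def by (simp add: insert_commute)
  have eL: "Rel (gl p) (gl q)" if "p \<in> PLs M A" "q \<in> PLs M A" "grid_adj p q" for p q
  proof -
    have "{gl p, gl q} \<in> EL (PLs M A)" unfolding EL_def using that by blast
    then show ?thesis using that unfolding Rel_def glue_gg by simp
  qed
  have eR: "Rel (gr p) (gr q)" if "p \<in> PRs M B" "q \<in> PRs M B" "grid_adj p q" for p q
  proof -
    have "{gr p, gr q} \<in> ER (PRs M B)" unfolding ER_def using that by blast
    then show ?thesis using that unfolding Rel_def glue_gg by simp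
  qed
  note mL = memL[of _ M _ A] and mR = memR[of _ M _ B]
  have colL: "j \<le> M \<Longrightarrow> Rel\<^sup>*\<^sup>* (gl (-1, int j)) (gl (-1, 0))" for j
  proof (induction j)
    case 0 then show ?case by simp
  next
    case (Suc j)
    have "Rel (gl (-1, int (Suc j))) (gl (-1, int j))" using Suc.prems by (intro eL mL; simp add: adjc)
    then show ?case using Suc by (meson Suc_leD converse_rtranclp_into_rtranclp)
  qed
  have colR: "j \<le> M \<Longrightarrow> Rel\<^sup>*\<^sup>* (gr (1, int j)) (gr (1, 0))" for j
  proof (induction j)
    case 0 then show ?case by simp
  next
    case (Suc j)
    have "Rel (gr (1, int (Suc j))) (gr (1, int j))" using Suc.prems by (intro eR mR; simp add: adjc)
    then show ?case using Suc by (meson Suc_leD converse_rtranclp_into_rtranclp)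
  qed
  define r where "r = gl (0,0)"
  have l0: "Rel\<^sup>*\<^sup>* (gl (-1,0)) r" unfolding r_def using M by (intro r_into_rtranclp eL mL memL0; simp add: adjc)
  have r0: "Rel\<^sup>*\<^sup>* (gr (1,0)) r"
  proof -
    have "Rel (gr (1,0)) (gr (0,0))" using M by (intro eR mR memR0; simp add: adjc)
    moreover have "gr (0,0) = r" unfolding r_def by (simp add: S0_def gr_alt gl_def)
    ultimately show ?thesis by auto
  qed
  have toL: "Rel\<^sup>*\<^sup>* (gl p) r" if "p \<in> PLs M A" for p
    using casesL[OF that]
  proof (elim disjE exE conjE bexE)
    fix x j assume p: "p = (x, int j)" "x \<in> {-2,-1}" "j \<le> M"
    have c: "Rel\<^sup>*\<^sup>* (gl (-1, int j)) r" using colL[OF p(3)] l0 by auto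
    show ?thesis
    proof (cases "x = -2")
      case True
      have "Rel (gl p) (gl (-1, int j))" by (rule eL[OF that]) (use p True in \<open>auto intro: mL simp: adjc\<close>)
      then show ?thesis using c by (meson converse_rtranclp_into_rtranclp)
    next
      case False
      then show ?thesis using c p by auto
    qed
  next
    assume "p = (0,0)" then show ?thesis unfolding r_def by simp
  next
    assume p01: "p = (0,1)"
    have "Rel (gl (0,1)) r" unfolding r_def by (intro eL memL0; simp add: adjc)
    then show ?thesis using p01 by auto
  next
    fix i assume i: "i \<in> A" "p = (0, int i + 2)"
    then have c: "Rel\<^sup>*\<^sup>* (gl (-1, int (i + 2))) r" using colL[of "i+2"] l0 iA by auto
    have i2: "i + 2 \<le> M" using i iA by auto
    have "Rel (gl (0, int i + 2)) (gl (-1, int (i + 2)))"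
      by (rule eL) (use i i2 in \<open>auto intro: memLt mL simp: adjc\<close>)
    then show ?thesis using c i(2) by (meson converse_rtranclp_into_rtranclp)
  qed
  have toR: "Rel\<^sup>*\<^sup>* (gr p) r" if "p \<in> PRs M B" for p
    using casesR[OF that]
  proof (elim disjE exE conjE bexE)
    fix x j assume p: "p = (x, int j)" "x \<in> {1,2}" "j \<le> M"
    have c: "Rel\<^sup>*\<^sup>* (gr (1, int j)) r" using colR[OF p(3)] r0 by auto
    show ?thesis
    proof (cases "x = 2")
      case True
      have "Rel (gr p) (gr (1, int j))" by (rule eR[OF that]) (use p True in \<open>auto intro: mR simp: adjc\<close>)
      then show ?thesis using c by (meson converse_rtranclp_into_rtranclp)
    next
      case False
      then show ?thesis using c p by auto
    qed
  next
    assume "p = (0,0)" then show ?thesis unfolding r_def by (simp add: S0_def gr_alt gl_def)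
  next
    assume p01: "p = (0,1)"
    have "Rel (gr (0,1)) (gr (0,0))" by (intro eR memR0; simp add: adjc)
    then have "Rel (gr p) (gr (0,0))" using p01 by simp
    moreover have "gr (0,0) = r" unfolding r_def by (simp add: S0_def gr_alt gl_def)
    ultimately show ?thesis by auto
  next
    fix i assume i: "i \<in> B" "p = (0, int i + 2)"
    then have c: "Rel\<^sup>*\<^sup>* (gr (1, int (i + 2))) r" using colR[of "i+2"] r0 iB by auto
    have i2: "i + 2 \<le> M" using i iB by auto
    have "Rel (gr (0, int i + 2)) (gr (1, int (i + 2)))"
      by (rule eR) (use i i2 in \<open>auto intro: memRt mR simp: adjc\<close>)
    then show ?thesis using c i(2) by (meson converse_rtranclp_into_rtranclp)
  qed
  have all: "Rel\<^sup>*\<^sup>* v r" if "v \<in> verts (Gr M A B)" for v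
    using that toL toR unfolding glue_gg by auto
  show ?thesis unfolding connected_graph_def
  proof (intro conjI ballI)
    show "verts (Gr M A B) \<noteq> {}" unfolding glue_gg using memL0(1)[of M A] by auto
    fix u v assume "u \<in> verts (Gr M A B)" "v \<in> verts (Gr M A B)"
    then have "Rel\<^sup>*\<^sup>* u r" "Rel\<^sup>*\<^sup>* v r" using all by auto
    moreover have "Rel\<^sup>*\<^sup>* r v" by (rule rtranclp_sym[of Rel, OF sym]) (use calculation in auto)
    ultimately have "Rel\<^sup>*\<^sup>* u v" by (meson rtranclp_trans)
    then show "(\<lambda>x y. x \<in> verts (Gr M A B) \<and> y \<in> verts (Gr M A B) \<and> {x, y} \<in> edges (Gr M A B))\<^sup>*\<^sup>* u v"
      unfolding Rel_def .
  qed
qed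

definition KL :: "(int \<times> int) set" where "KL = {(0,0),(0,1),(-1,0),(-1,1)}"
definition KR :: "(int \<times> int) set" where "KR = {(0,0),(0,1),(1,0),(1,1)}"
definition W0 :: "(nat + nat) set" where "W0 = gl ` KL \<union> {gr (1,0), gr (1,1)}"

lemma inEL: "p \<in> PLs M A \<Longrightarrow> q \<in> PLs M A \<Longrightarrow> grid_adj p q \<Longrightarrow> {gl p, gl q} \<in> edges (Gr M A B)"
proof -
  assume h: "p \<in> PLs M A" "q \<in> PLs M A" "grid_adj p q"
  then have "{gl p, gl q} \<in> EL (PLs M A)" unfolding EL_def by blast
  then show ?thesis unfolding glue_gg by simp
qed

lemma inER: "p \<in> PRs M B \<Longrightarrow> q \<in> PRs M B \<Longrightarrow> grid_adj p q \<Longrightarrow> {gr p, gr q} \<in> edges (Gr M A B)"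
proof -
  assume h: "p \<in> PRs M B" "q \<in> PRs M B" "grid_adj p q"
  then have "{gr p, gr q} \<in> ER (PRs M B)" unfolding ER_def by blast
  then show ?thesis unfolding glue_gg by simp
qed

lemma KL_sub: "1 \<le> M \<Longrightarrow> KL \<subseteq> PLs M A"
  unfolding KL_def using memL0 memL[of 0 M "-1" A] memL[of 1 M "-1" A] by auto
lemma KR_sub: "1 \<le> M \<Longrightarrow> KR \<subseteq> PRs M B"
  unfolding KR_def using memR0 memR[of 0 M 1 B] memR[of 1 M 1 B] by auto

lemma W0_sub: "1 \<le> M \<Longrightarrow> W0 \<subseteq> verts (Gr M A B)"
  unfolding W0_def glue_gg using KL_sub[of M A] KR_sub[of M B] by (auto simp: KR_def)

lemma glW0: "gl p \<in> W0 \<Longrightarrow> p \<in> KL"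
proof -
  assume "gl p \<in> W0"
  then consider "gl p \<in> gl ` KL" | "gl p = gr (1,0)" | "gl p = gr (1,1)" unfolding W0_def by blast
  then show ?thesis
  proof cases
    case 1 then show ?thesis by (metis gl_inj imageE)
  next
    case 2 then have "(1::int,0::int) \<in> S0" by (metis gl_gr)
    then show ?thesis by (simp add: S0_def)
  next
    case 3 then have "(1::int,1::int) \<in> S0" by (metis gl_gr)
    then show ?thesis by (simp add: S0_def)
  qed
qed

lemma grW0: "gr p \<in> W0 \<Longrightarrow> p \<in> KR"
proof -
  assume "gr p \<in> W0"
  then consider k where "k \<in> KL" "gr p = gl k" | "gr p = gr (1,0)" | "gr p = gr (1,1)" unfolding W0_def by blast
  then show ?thesis
  proof cases
    case 1 then have "p \<in> S0" by (metis gr_gl)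
    then show ?thesis unfolding S0_def KR_def by blast
  next
    case 2 then show ?thesis by (simp add: KR_def)
  next
    case 3 then show ?thesis by (simp add: KR_def)
  qed
qed

lemma card_W0: "card W0 \<le> 6"
proof -
  have "card W0 \<le> card (gl ` KL) + card {gr (1,0), gr (1,1)}" unfolding W0_def by (rule card_Un_le)
  also have "card (gl ` KL) \<le> card KL" by (rule card_image_le) (simp add: KL_def)
  also have "card KL \<le> 4" unfolding KL_def by (rule card_insert_le_m1; simp)+
  also have "card {gr (1,0), gr (1,1)} \<le> 2" by (rule card_insert_le_m1; simp)+
  finally show ?thesis by simp
qed

lemma notinL: "(1, y) \<notin> PLs M X" "(0, -1) \<notin> PLs M X" "0 \<notin> X \<Longrightarrow> (0, 2) \<notin> PLs M X"
  unfolding PLs_def by auto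
lemma notinR: "(-1, y) \<notin> PRs M X" "(0, -1) \<notin> PRs M X" "0 \<notin> X \<Longrightarrow> (0, 2) \<notin> PRs M X"
  unfolding PRs_def by auto

lemma cand: "s \<in> S0 \<Longrightarrow> grid_adj s t \<Longrightarrow> t \<in> {(1,0),(-1,0),(0,1),(0,-1),(1,1),(-1,1),(0,2),(0,0)}"
proof -
  assume h: "s \<in> S0" "grid_adj s t"
  then have "t - s \<in> U" by (simp add: adj_iff)
  then have "t \<in> {s + (1,0), s + (-1,0), s + (0,1), s + (0,-1)}" unfolding U_def by (auto simp: algebra_simps)
  moreover have "s = (0,0) \<or> s = (0,1)" using h(1) unfolding S0_def by blast
  ultimately show ?thesis by auto
qed

lemma nbL: "s \<in> S0 \<Longrightarrow> t \<in> PLs M X \<Longrightarrow> 0 \<notin> X \<Longrightarrow> grid_adj s t \<Longrightarrow> t \<in> KL"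
proof -
  assume h: "s \<in> S0" "t \<in> PLs M X" "0 \<notin> X" "grid_adj s t"
  have "t \<in> {(1,0),(-1,0),(0,1),(0,-1),(1,1),(-1,1),(0,2),(0,0)}" using cand h(1,4) .
  moreover have "t \<noteq> (1,0)" "t \<noteq> (1,1)" "t \<noteq> (0,-1)" "t \<noteq> (0,2)" using h(2,3) notinL by auto
  ultimately show ?thesis unfolding KL_def by blast
qed

lemma nbR: "s \<in> S0 \<Longrightarrow> t \<in> PRs M X \<Longrightarrow> 0 \<notin> X \<Longrightarrow> grid_adj s t \<Longrightarrow> t \<in> KR"
proof -
  assume h: "s \<in> S0" "t \<in> PRs M X" "0 \<notin> X" "grid_adj s t"
  have "t \<in> {(1,0),(-1,0),(0,1),(0,-1),(1,1),(-1,1),(0,2),(0,0)}" using cand h(1,4) .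
  moreover have "t \<noteq> (-1,0)" "t \<noteq> (-1,1)" "t \<noteq> (0,-1)" "t \<noteq> (0,2)" using h(2,3) notinR by auto
  ultimately show ?thesis unfolding KR_def by blast
qed

lemma InlSS: "Inl ` SS = gl ` S0" unfolding SS_def gl_def by auto

lemma nbhd:
  assumes M: "1 \<le> M" and A: "0 \<notin> A" and B: "0 \<notin> B"
  shows "closed_nbhd (Gr M A B) (Inl ` SS) = W0"
proof
  show "closed_nbhd (Gr M A B) (Inl ` SS) \<subseteq> W0"
  proof
    fix x assume "x \<in> closed_nbhd (Gr M A B) (Inl ` SS)"
    then consider "x \<in> gl ` S0" | s where "s \<in> S0" "{gl s, x} \<in> EL (PLs M A) \<union> ER (PRs M B)"
      unfolding closed_nbhd_def InlSS glue_gg by auto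
    then show "x \<in> W0"
    proof cases
      case 1 then show ?thesis unfolding W0_def KL_def S0_def by auto
    next
      case 2
      then consider "{gl s, x} \<in> EL (PLs M A)" | "{gl s, x} \<in> ER (PRs M B)" by auto
      then show ?thesis
      proof cases
        case 1
        then obtain p q where pq: "{gl s, x} = {gl p, gl q}" "p \<in> PLs M A" "q \<in> PLs M A" "grid_adj p q"
          unfolding EL_def by blast
        then have "(s = p \<and> x = gl q) \<or> (s = q \<and> x = gl p)" by (auto simp: doubleton_eq_iff)
        then show ?thesis
        proof
          assume "s = p \<and> x = gl q"
          then have "q \<in> KL" using nbL[of s q M A] 2 pq A by auto
          then show ?thesis using \<open>s = p \<and> x = gl q\<close> unfolding W0_def by auto
        next
          assume "s = q \<and> x = gl p"
          then have "p \<in> KL" using nbL[of s p M A] 2 pq A adj_sym by auto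
          then show ?thesis using \<open>s = q \<and> x = gl p\<close> unfolding W0_def by auto
        qed
      next
        case 3: 2
        then obtain p q where pq: "{gl s, x} = {gr p, gr q}" "p \<in> PRs M B" "q \<in> PRs M B" "grid_adj p q"
          unfolding ER_def by blast
        then have "(s = p \<and> x = gr q) \<or> (s = q \<and> x = gr p)" using 2 by (auto simp: doubleton_eq_iff)
        then have "\<exists>t. x = gr t \<and> t \<in> KR"
        proof
          assume "s = p \<and> x = gr q"
          then show ?thesis using nbR[of s q M B] 2 pq B by auto
        next
          assume "s = q \<and> x = gr p"
          then show ?thesis using nbR[of s p M B] 2 pq B adj_sym by auto
        qed
        then show ?thesis unfolding W0_def KR_def KL_def by (auto simp: S0_def gr_alt gl_def)
      qed
    qed
  qed
next
  show "W0 \<subseteq> closed_nbhd (Gr M A B) (Inl ` SS)"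
  proof
    fix x assume x: "x \<in> W0"
    have V: "x \<in> verts (Gr M A B)" using W0_sub[OF M] x by auto
    have u0: "gl (0,0) \<in> Inl ` SS" "gl (0,1) \<in> Inl ` SS" unfolding InlSS S0_def by auto
    have e: "{gl (0,0), gl (-1,0)} \<in> edges (Gr M A B)" "{gl (0,1), gl (-1,1)} \<in> edges (Gr M A B)"
      using M by (intro inEL memL0 memL; simp add: adjc)+
    have e2: "{gr (0,0), gr (1,0)} \<in> edges (Gr M A B)" "{gr (0,1), gr (1,1)} \<in> edges (Gr M A B)"
      using M by (intro inER memR0 memR; simp add: adjc)+
    have g: "gr (0,0) = gl (0,0)" "gr (0,1) = gl (0,1)" by (simp_all add: gr_alt gl_def S0_def)
    have mem: "x \<in> closed_nbhd (Gr M A B) (Inl ` SS)" if "u \<in> Inl ` SS" "{u, x} \<in> edges (Gr M A B)" for u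
      unfolding closed_nbhd_def using V that by blast
    have memT: "x \<in> closed_nbhd (Gr M A B) (Inl ` SS)" if "x \<in> Inl ` SS"
      unfolding closed_nbhd_def using V that by blast
    have e3: "{gl (0,0), gr (1,0)} \<in> edges (Gr M A B)" "{gl (0,1), gr (1,1)} \<in> edges (Gr M A B)"
      using e2 g by simp_all
    from x consider "x = gl (0,0)" | "x = gl (0,1)" | "x = gl (-1,0)" | "x = gl (-1,1)" | "x = gr (1,0)" | "x = gr (1,1)"
      unfolding W0_def KL_def by auto
    then show "x \<in> closed_nbhd (Gr M A B) (Inl ` SS)"
    proof cases
      case 1 then show ?thesis using memT u0 by simp
    next
      case 2 then show ?thesis using memT u0 by simp
    next
      case 3 then show ?thesis using mem[OF u0(1)] e(1) by simp
    next
      case 4 then show ?thesis using mem[OF u0(2)] e(2) by simp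
    next
      case 5 then show ?thesis using mem[OF u0(1)] e3(1) by simp
    next
      case 6 then show ?thesis using mem[OF u0(2)] e3(2) by simp
    qed
  qed
qed

lemma edges_W0:
  assumes M: "1 \<le> M"
  shows "{e \<in> edges (Gr M A B). e \<subseteq> W0} = {e \<in> EL KL \<union> ER KR. e \<subseteq> W0}"
proof
  show "{e \<in> edges (Gr M A B). e \<subseteq> W0} \<subseteq> {e \<in> EL KL \<union> ER KR. e \<subseteq> W0}"
  proof
    fix e assume "e \<in> {e \<in> edges (Gr M A B). e \<subseteq> W0}"
    then have e: "e \<in> edges (Gr M A B)" "e \<subseteq> W0" by auto
    from e(1) consider "e \<in> EL (PLs M A)" | "e \<in> ER (PRs M B)" unfolding glue_gg by auto
    then have "e \<in> EL KL \<union> ER KR"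
    proof cases
      case 1
      then obtain p q where pq: "e = {gl p, gl q}" "grid_adj p q" unfolding EL_def by blast
      then have "p \<in> KL" "q \<in> KL" using e(2) glW0 by auto
      then show ?thesis using pq unfolding EL_def by blast
    next
      case 2
      then obtain p q where pq: "e = {gr p, gr q}" "grid_adj p q" unfolding ER_def by blast
      then have "p \<in> KR" "q \<in> KR" using e(2) grW0 by auto
      then show ?thesis using pq unfolding ER_def by blast
    qed
    then show "e \<in> {e \<in> EL KL \<union> ER KR. e \<subseteq> W0}" using e by auto
  qed
  have "EL KL \<subseteq> EL (PLs M A)" using KL_sub[OF M] unfolding EL_def by blast
  moreover have "ER KR \<subseteq> ER (PRs M B)" using KR_sub[OF M] unfolding ER_def by blast
  ultimately show "{e \<in> EL KL \<union> ER KR. e \<subseteq> W0} \<subseteq> {e \<in> edges (Gr M A B). e \<subseteq> W0}"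
    unfolding glue_gg by auto
qed

lemma induced_eq:
  assumes "1 \<le> M"
  shows "induced (Gr M A B) W0 = induced (Gr M A' B') W0"
  unfolding induced_def using edges_W0[OF assms, of A B] edges_W0[OF assms, of A' B']
    W0_sub[OF assms, of A B] W0_sub[OF assms, of A' B'] by (simp add: Int_absorb2)

lemma iso_refl: "iso_fixing T H H"
  unfolding iso_fixing_def by (intro exI[of _ id]) auto

lemma card_sub: "X \<subseteq> {1..N} \<Longrightarrow> card X \<le> N"
  using card_mono[of "{1..N}" X] by auto

theorem theorem5p5:
  shows "disjointness_expressing grid_subgraph 6 1"
  unfolding disjointness_expressing_def
proof (intro exI[of _ "26::real"] conjI allI impI)
  show "(0::real) < 26" by simp
  fix N :: nat assume N: "1 \<le> N"
  define M where "M = N + 3"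
  have M1: "1 \<le> M" unfolding M_def by simp
  show "\<exists>(S :: nat set) (L :: nat set \<Rightarrow> nat graph) (R :: nat set \<Rightarrow> nat graph). finite S \<and>
            (\<forall>X. X \<subseteq> {1..N} \<longrightarrow> wf_graph (L X) \<and> wf_graph (R X) \<and> S \<subseteq> verts (L X) \<and> S \<subseteq> verts (R X)) \<and>
            (\<forall>A B. A \<subseteq> {1..N} \<longrightarrow> B \<subseteq> {1..N} \<longrightarrow>
               connected_graph (glue S (L A) (R B)) \<and>
               real (card (verts (glue S (L A) (R B)))) \<le> 26 * real N powr (1 / real 1) \<and>
               card (closed_nbhd (glue S (L A) (R B)) (Inl ` S)) \<le> 6 \<and>
               (grid_subgraph (glue S (L A) (R B)) \<longleftrightarrow> A \<inter> B = {})) \<and>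
            (\<forall>A B A' B'. A \<subseteq> {1..N} \<longrightarrow> B \<subseteq> {1..N} \<longrightarrow>
                         A' \<subseteq> {1..N} \<longrightarrow> B' \<subseteq> {1..N} \<longrightarrow>
               iso_fixing (Inl ` S)
                 (induced (glue S (L A) (R B)) (closed_nbhd (glue S (L A) (R B)) (Inl ` S)))
                 (induced (glue S (L A') (R B')) (closed_nbhd (glue S (L A') (R B')) (Inl ` S))))"
  proof (rule exI[of _ SS], rule exI[of _ "\<lambda>X. gg (PLs M X)"], rule exI[of _ "\<lambda>X. gg (PRs M X)"], intro conjI allI impI)
    show "finite SS" unfolding SS_def S0_def by simp
  next
    fix X :: "nat set" assume X: "X \<subseteq> {1..N}"
    then have fX: "finite X" using finite_subset by blast
    show "wf_graph (gg (PLs M X))" by (rule wf_gg[OF fin_PLs[OF fX]])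
    show "wf_graph (gg (PRs M X))" by (rule wf_gg[OF fin_PRs[OF fX]])
    show "SS \<subseteq> verts (gg (PLs M X))" unfolding SS_def gg_def S0_def using memL0[of M X] by auto
    show "SS \<subseteq> verts (gg (PRs M X))" unfolding SS_def gg_def S0_def using memR0[of M X] by auto
  next
    fix A B :: "nat set" assume A: "A \<subseteq> {1..N}" and B: "B \<subseteq> {1..N}"
    have fA: "finite A" and fB: "finite B" using A B finite_subset by blast+
    have A0: "0 \<notin> A" and B0: "0 \<notin> B" using A B by auto
    show "connected_graph (glue SS (gg (PLs M A)) (gg (PRs M B)))"
      by (rule conn[OF M1]) (use A B in \<open>auto simp: M_def\<close>)
    have "card (verts (Gr M A B)) \<le> card (gl ` PLs M A) + card (gr ` PRs M B)"
      unfolding glue_gg by (simp add: card_Un_le)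
    also have "\<dots> \<le> card (PLs M A) + card (PRs M B)" by (intro add_mono card_image_le fin_PLs fin_PRs fA fB)
    also have "\<dots> \<le> (2 * (M + 1) + 2 + card A) + (2 * (M + 1) + 2 + card B)"
      by (intro add_mono card_PLs card_PRs fA fB)
    also have "\<dots> \<le> 26 * N" using card_sub[OF A] card_sub[OF B] N unfolding M_def by arith
    finally have "real (card (verts (Gr M A B))) \<le> 26 * real N" by linarith
    then show "real (card (verts (glue SS (gg (PLs M A)) (gg (PRs M B))))) \<le> 26 * real N powr (1 / real 1)"
      by simp
    show "card (closed_nbhd (glue SS (gg (PLs M A)) (gg (PRs M B))) (Inl ` SS)) \<le> 6"
      using nbhd[OF M1 A0 B0] card_W0 by simp
    show "grid_subgraph (glue SS (gg (PLs M A)) (gg (PRs M B))) \<longleftrightarrow> A \<inter> B = {}"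
    proof
      assume g: "grid_subgraph (glue SS (gg (PLs M A)) (gg (PRs M B)))"
      show "A \<inter> B = {}"
      proof (rule ccontr)
        assume "A \<inter> B \<noteq> {}"
        then obtain i where "i \<in> A" "i \<in> B" by blast
        moreover have "i + 3 \<le> M" using \<open>i \<in> A\<close> A unfolding M_def by auto
        ultimately show False using neg[OF g] by blast
      qed
    next
      assume "A \<inter> B = {}"
      then show "grid_subgraph (glue SS (gg (PLs M A)) (gg (PRs M B)))" by (rule pos[OF fA fB])
    qed
  next
    fix A B A' B' :: "nat set"
    assume A: "A \<subseteq> {1..N}" and B: "B \<subseteq> {1..N}" and A': "A' \<subseteq> {1..N}" and B': "B' \<subseteq> {1..N}"
    have z: "0 \<notin> A" "0 \<notin> B" "0 \<notin> A'" "0 \<notin> B'" using A B A' B' by auto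
    show "iso_fixing (Inl ` SS)
         (induced (glue SS (gg (PLs M A)) (gg (PRs M B))) (closed_nbhd (glue SS (gg (PLs M A)) (gg (PRs M B))) (Inl ` SS)))
         (induced (glue SS (gg (PLs M A')) (gg (PRs M B'))) (closed_nbhd (glue SS (gg (PLs M A')) (gg (PRs M B'))) (Inl ` SS)))"
      unfolding nbhd[OF M1 z(1,2)] nbhd[OF M1 z(3,4)] induced_eq[OF M1, of A B A' B'] by (rule iso_refl)
  qed
qed

end
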